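(* Under Plurality, $2$-by-$2$ GS-games of types (ii), (iii), (iv) and (v) are realizable, while $2$-by-$2$ GS-games of types (i) and (vi) are not realizable. That is, for each of the types (ii)–(v) there exist a finite candidate set, a tie-breaking order, a profile $V$ and a $2$-by-$2$ GS-game for $V$ under Plurality of that type, and no $2$-by-$2$ GS-game under Plurality (for any candidate set, tie-breaking order and profile) is of type (i) or (vi).
   Context: Each voter $i$ has a strict linear order $v_i$ over the candidate set $C$. Plurality: each candidate gets one point from each voter ranking her first; the highest score wins, ties broken in favour of the candidate highest in a fixed strict linear order $>$ on $C$. Write $\mathcal{R}$ for the rule and $(V_{-i},v_i')$ for $V$ with $v_i$ replaced by $v_i'$. A GS-manipulation of voter $i$ at $V$ is a vote $v_i'$ such that $i$ strictly prefers $\mathcal{R}(V_{-i},v_i')$ to $\mathcal{R}(V)$ and for every vote $v_i''$ either $\mathcal{R}(V_{-i},v_i'')=\mathcal{R}(V_{-i},v_i')$ or $i$ strictly prefers $\mathcal{R}(V_{-i},v_i')$ to $\mathcal{R}(V_{-i},v_i'')$; $i$ is a GS-manipulator if he has one. A GS-game for $V$ has as players all GS-manipulators at $V$, each player $i$ having action set consisting of $v_i$ and a subset of his GS-manipulations; other voters vote sincerely; players compare action profiles by their preferences over the resulting winners. A $2$-by-$2$ GS-game is one with exactly two players $1,2$ (i.e. exactly two GS-manipulators at $V$), with action sets $\{s_1,i_1\}$ and $\{s_2,i_2\}$ where $s_p=v_p$ is the sincere vote and $i_p$ a GS-manipulation. Let $W(a,b)$ be the winner when player 1 plays $a$ and player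 2 plays $b$. Define $\rho_1=+$ if player 1 strictly prefers $W(i_1,i_2)$ to $W(s_1,i_2)$, $\rho_1=0$ if $W(i_1,i_2)=W(s_1,i_2)$, $\rho_1=-$ if player 1 strictly prefers $W(s_1,i_2)$ to $W(i_1,i_2)$; define $\rho_2$ analogously for player 2 comparing $W(i_1,i_2)$ with $W(i_1,s_2)$. The type of the game is determined by the unordered pair $\{\rho_1,\rho_2\}$: type (i) $\{+,+\}$, (ii) $\{-,-\}$, (iii) $\{0,0\}$, (iv) $\{+,0\}$, (v) $\{-,0\}$, (vi) $\{+,-\}$. *)

theory Defs
  imports Main
begin

(* A vote (strict linear order over the candidate set C) is a list of all
   candidates without repetition; earlier = more preferred.
   The tie-breaking order > is represented the same way (earlier = higher). *)
definition is_vote :: "'c set \<Rightarrow> 'c list \<Rightarrow> bool" where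
  "is_vote C v \<longleftrightarrow> distinct v \<and> set v = C"

definition prefers :: "'c list \<Rightarrow> 'c \<Rightarrow> 'c \<Rightarrow> bool" where
  "prefers v a b \<longleftrightarrow> (\<exists>j k. j < k \<and> k < length v \<and> v ! j = a \<and> v ! k = b)"

definition valid_election :: "'c set \<Rightarrow> 'c list \<Rightarrow> 'c list list \<Rightarrow> bool" where
  "valid_election C tb V \<longleftrightarrow> finite C \<and> C \<noteq> {} \<and> is_vote C tb \<and> (\<forall>v\<in>set V. is_vote C v)"

definition plur_score :: "'c list list \<Rightarrow> 'c \<Rightarrow> nat" where
  "plur_score V c = length (filter (\<lambda>v. hd v = c) V)"

definition plurality :: "'c list \<Rightarrow> 'c list list \<Rightarrow> 'c" where
  "plurality tb V =
     hd (filter (\<lambda>c. \<forall>d\<in>set tb. plur_score V d \<le> plur_score V c) tb)"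

definition GS_manipulation :: "'c set \<Rightarrow> 'c list \<Rightarrow> 'c list list \<Rightarrow> nat \<Rightarrow> 'c list \<Rightarrow> bool" where
  "GS_manipulation C tb V i v' \<longleftrightarrow>
     i < length V \<and> is_vote C v' \<and>
     prefers (V ! i) (plurality tb (V[i := v'])) (plurality tb V) \<and>
     (\<forall>v''. is_vote C v'' \<longrightarrow>
        plurality tb (V[i := v'']) = plurality tb (V[i := v']) \<or>
        prefers (V ! i) (plurality tb (V[i := v'])) (plurality tb (V[i := v''])))"

definition GS_manipulator :: "'c set \<Rightarrow> 'c list \<Rightarrow> 'c list list \<Rightarrow> nat \<Rightarrow> bool" where
  "GS_manipulator C tb V i \<longleftrightarrow> (\<exists>v'. GS_manipulation C tb V i v')"

definition two_by_two_GS_game ::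
  "'c set \<Rightarrow> 'c list \<Rightarrow> 'c list list \<Rightarrow> nat \<Rightarrow> nat \<Rightarrow> 'c list \<Rightarrow> 'c list \<Rightarrow> bool" where
  "two_by_two_GS_game C tb V p1 p2 i1 i2 \<longleftrightarrow>
     p1 \<noteq> p2 \<and> {i. GS_manipulator C tb V i} = {p1, p2} \<and>
     GS_manipulation C tb V p1 i1 \<and> GS_manipulation C tb V p2 i2"

definition game_winner :: "'c list \<Rightarrow> 'c list list \<Rightarrow> nat \<Rightarrow> nat \<Rightarrow> 'c list \<Rightarrow> 'c list \<Rightarrow> 'c" where
  "game_winner tb V p1 p2 a b = plurality tb (V[p1 := a, p2 := b])"

datatype rho = RPos | RZero | RNeg

definition rho_of :: "'c list \<Rightarrow> 'c \<Rightarrow> 'c \<Rightarrow> rho" where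
  "rho_of v x y = (if x = y then RZero else if prefers v x y then RPos else RNeg)"

definition rho1 :: "'c list \<Rightarrow> 'c list list \<Rightarrow> nat \<Rightarrow> nat \<Rightarrow> 'c list \<Rightarrow> 'c list \<Rightarrow> rho" where
  "rho1 tb V p1 p2 i1 i2 =
     rho_of (V ! p1) (game_winner tb V p1 p2 i1 i2) (game_winner tb V p1 p2 (V ! p1) i2)"

definition rho2 :: "'c list \<Rightarrow> 'c list list \<Rightarrow> nat \<Rightarrow> nat \<Rightarrow> 'c list \<Rightarrow> 'c list \<Rightarrow> rho" where
  "rho2 tb V p1 p2 i1 i2 =
     rho_of (V ! p2) (game_winner tb V p1 p2 i1 i2) (game_winner tb V p1 p2 i1 (V ! p2))"

datatype game_type = Type_i | Type_ii | Type_iii | Type_iv | Type_v | Type_vi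

fun type_of_pair :: "rho \<Rightarrow> rho \<Rightarrow> game_type" where
  "type_of_pair RPos RPos = Type_i"
| "type_of_pair RNeg RNeg = Type_ii"
| "type_of_pair RZero RZero = Type_iii"
| "type_of_pair RPos RZero = Type_iv"
| "type_of_pair RZero RPos = Type_iv"
| "type_of_pair RNeg RZero = Type_v"
| "type_of_pair RZero RNeg = Type_v"
| "type_of_pair RPos RNeg = Type_vi"
| "type_of_pair RNeg RPos = Type_vi"

definition GS_game_type :: "'c list \<Rightarrow> 'c list list \<Rightarrow> nat \<Rightarrow> nat \<Rightarrow> 'c list \<Rightarrow> 'c list \<Rightarrow> game_type" where
  "GS_game_type tb V p1 p2 i1 i2 = type_of_pair (rho1 tb V p1 p2 i1 i2) (rho2 tb V p1 p2 i1 i2)"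

end

theory Submission
  imports Defs
begin

lemma prefers_Nil[simp]: "\<not> prefers [] a b"
  by (simp add: prefers_def)

lemma prefers_Cons[simp]:
  "prefers (x # xs) a b \<longleftrightarrow> (a = x \<and> b \<in> set xs) \<or> prefers xs a b"
proof
  assume "prefers (x # xs) a b"
  then obtain j k where jk: "j < k" "k < length (x#xs)" "(x#xs) ! j = a" "(x#xs) ! k = b"
    unfolding prefers_def by blast
  then obtain k' where k': "k = Suc k'" by (cases k) auto
  show "(a = x \<and> b \<in> set xs) \<or> prefers xs a b"
  proof (cases j)
    case 0
    then show ?thesis using jk k' by auto
  next
    case (Suc j')
    then have "prefers xs a b" unfolding prefers_def using jk k'
      by (intro exI[of _ j'] exI[of _ k']) auto
    then show ?thesis by blast
  qed
next
  assume "(a = x \<and> b \<in> set xs) \<or> prefers xs a b"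
  then show "prefers (x # xs) a b"
  proof
    assume h: "a = x \<and> b \<in> set xs"
    then obtain k where "k < length xs" "xs ! k = b" by (auto simp: in_set_conv_nth)
    then show ?thesis unfolding prefers_def using h
      by (intro exI[of _ 0] exI[of _ "Suc k"]) auto
  next
    assume "prefers xs a b"
    then obtain j k where "j < k" "k < length xs" "xs ! j = a" "xs ! k = b"
      unfolding prefers_def by blast
    then show ?thesis unfolding prefers_def
      by (intro exI[of _ "Suc j"] exI[of _ "Suc k"]) auto
  qed
qed

lemma prefers_asym: "distinct v \<Longrightarrow> prefers v x y \<Longrightarrow> prefers v y x \<Longrightarrow> False"
  unfolding prefers_def
  by (metis less_trans nth_eq_iff_index_eq order.asym order.strict_trans)

lemma prefers_irrefl: "distinct v \<Longrightarrow> prefers v x x \<Longrightarrow> False"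
  unfolding prefers_def
  by (metis less_trans nth_eq_iff_index_eq order.irrefl)

lemma prefers_hd: "distinct v \<Longrightarrow> prefers v x (hd v) \<Longrightarrow> False"
  unfolding prefers_def
  by (metis hd_conv_nth length_greater_0_conv less_trans nth_eq_iff_index_eq
      not_less0 order.strict_trans list.size(3))

lemma prefers_hd2: "distinct v \<Longrightarrow> x \<in> set v \<Longrightarrow> x \<noteq> hd v \<Longrightarrow> prefers v (hd v) x"
  by (cases v) auto

definition beats :: "'c list \<Rightarrow> ('c \<Rightarrow> int) \<Rightarrow> 'c \<Rightarrow> 'c \<Rightarrow> bool" where
  "beats tb f x y \<longleftrightarrow> f y < f x \<or> (f y = f x \<and> (x = y \<or> prefers tb x y))"

definition win :: "'c list \<Rightarrow> ('c \<Rightarrow> int) \<Rightarrow> 'c" where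
  "win tb f = hd (filter (\<lambda>c. \<forall>d\<in>set tb. f d \<le> f c) tb)"

definition sc :: "'c list list \<Rightarrow> 'c \<Rightarrow> int" where
  "sc V c = int (plur_score V c)"

lemma plurality_win: "plurality tb V = win tb (sc V)"
  unfolding plurality_def win_def sc_def by simp

lemma hd_filter:
  "x \<in> set xs \<Longrightarrow> P x \<Longrightarrow> hd (filter P xs) \<in> set xs \<and> P (hd (filter P xs)) \<and>
     (hd (filter P xs) = x \<or> prefers xs (hd (filter P xs)) x)"
  by (induction xs) auto

lemma win_props:
  assumes "tb \<noteq> []"
  shows "win tb f \<in> set tb \<and> (\<forall>d\<in>set tb. beats tb f (win tb f) d)"
proof -
  let ?P = "\<lambda>c. \<forall>d\<in>set tb. f d \<le> f c"
  have fin: "finite (f ` set tb)" "f ` set tb \<noteq> {}" using assms by auto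
  obtain m where m: "m \<in> set tb" "f m = Max (f ` set tb)"
    using Max_in[OF fin] by auto
  have Pm: "?P m" using m fin by auto
  from hd_filter[OF m(1), of ?P] Pm
  have h: "win tb f \<in> set tb" "?P (win tb f)" unfolding win_def by auto
  have "beats tb f (win tb f) d" if d: "d \<in> set tb" for d
  proof (cases "f d = f (win tb f)")
    case True
    then have "?P d" using h by auto
    from hd_filter[OF d, of ?P] this have "win tb f = d \<or> prefers tb (win tb f) d"
      unfolding win_def by blast
    then show ?thesis unfolding beats_def using True by auto
  next
    case False
    have "f d \<le> f (win tb f)" using h d by blast
    then show ?thesis using False unfolding beats_def by auto
  qed
  then show ?thesis using h by blast
qed

lemma beats_antisym: "distinct tb \<Longrightarrow> beats tb f x y \<Longrightarrow> beats tb f y x \<Longrightarrow> x = y"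
  unfolding beats_def using prefers_asym by fastforce

lemma beats_mono: "beats tb f x y \<Longrightarrow> f x \<le> g x \<Longrightarrow> g y \<le> f y \<Longrightarrow> beats tb g x y"
  unfolding beats_def by auto

lemma sc_upd: "i < length V \<Longrightarrow>
  sc (V[i:=v]) c = sc V c - (if hd (V!i) = c then 1 else 0) + (if hd v = c then 1 else 0)"
proof (induction V arbitrary: i)
  case Nil then show ?case by simp
next
  case (Cons u V)
  show ?case
  proof (cases i)
    case 0 then show ?thesis by (auto simp: sc_def plur_score_def)
  next
    case (Suc j)
    have "j < length V" using Cons.prems Suc by simp
    from Cons.IH[OF this] Suc show ?thesis by (auto simp: sc_def plur_score_def)
  qed
qed


lemma valid_facts:
  assumes "valid_election C tb V"
  shows "distinct tb" "tb \<noteq> []" "set tb = C"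
    "\<And>v. v \<in> set V \<Longrightarrow> distinct v \<and> set v = C \<and> v \<noteq> []"
  using assms unfolding valid_election_def is_vote_def by auto

lemma manip_facts:
  assumes val: "valid_election C tb V" and gs: "GS_manipulation C tb V p v'"
  shows "hd (V!p) \<noteq> plurality tb V" "hd v' \<noteq> plurality tb V" "hd v' \<noteq> hd (V!p)"
    "plurality tb (V[p:=v']) = hd v'"
    "beats tb (sc (V[p:=v'])) (hd v') (plurality tb V)"
    "sc (V[p:=v']) (hd v') = sc V (hd v') + 1"
    "sc (V[p:=v']) (plurality tb V) = sc V (plurality tb V)"
    "hd v' \<in> C" "hd (V!p) \<in> C" "plurality tb V \<in> C"
proof -
  note vf = valid_facts[OF val]
  have p: "p < length V" and vv: "is_vote C v'"
    and m1: "prefers (V!p) (plurality tb (V[p:=v'])) (plurality tb V)"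
    using gs unfolding GS_manipulation_def by auto
  have Vp: "distinct (V!p)" "set (V!p) = C" "V!p \<noteq> []" using vf(4)[of "V!p"] p by auto
  have v': "distinct v'" "set v' = C" "v' \<noteq> []" using vv vf unfolding is_vote_def by auto
  define a where "a = hd (V!p)"
  define b where "b = hd v'"
  define w where "w = plurality tb V"
  define W1 where "W1 = plurality tb (V[p:=v'])"
  define f1 where "f1 = sc (V[p:=v'])"
  have f1: "\<And>c. f1 c = sc V c - (if a = c then 1 else 0) + (if b = c then 1 else 0)"
    unfolding f1_def a_def b_def using sc_upd[OF p] by simp
  have wp: "w \<in> set tb" "\<forall>d\<in>set tb. beats tb (sc V) w d"
    using win_props[OF vf(2)] unfolding w_def plurality_win by auto
  have W1p: "W1 \<in> set tb" "\<forall>d\<in>set tb. beats tb f1 W1 d"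
    using win_props[OF vf(2)] unfolding W1_def f1_def plurality_win by auto
  have aw: "a \<noteq> w"
    using m1 prefers_hd[OF Vp(1)] unfolding a_def w_def by metis
  have W1w: "W1 \<noteq> w" using m1 prefers_irrefl[OF Vp(1)] unfolding W1_def w_def by metis
  have W1b: "W1 = b"
  proof (rule ccontr)
    assume nb: "W1 \<noteq> b"
    have "beats tb f1 w W1"
      using beats_mono[of tb "sc V" w W1 f1] wp W1p aw nb f1 by auto
    moreover have "beats tb f1 W1 w" using W1p wp by auto
    ultimately show False using beats_antisym[OF vf(1)] W1w by blast
  qed
  have ba: "b \<noteq> a"
  proof
    assume "b = a"
    then have "f1 = sc V" using f1 by auto
    then have "W1 = w" unfolding W1_def w_def f1_def plurality_win by simp
    then show False using W1w by simp
  qed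
  show "hd (V!p) \<noteq> plurality tb V" using aw a_def w_def by simp
  show "hd v' \<noteq> plurality tb V" using W1w W1b b_def w_def by simp
  show "hd v' \<noteq> hd (V!p)" using ba a_def b_def by simp
  show "plurality tb (V[p:=v']) = hd v'" using W1b W1_def b_def by simp
  show "beats tb (sc (V[p:=v'])) (hd v') (plurality tb V)"
    using W1p wp W1b unfolding f1_def b_def w_def by auto
  show "sc (V[p:=v']) (hd v') = sc V (hd v') + 1" using f1 ba unfolding f1_def b_def by simp
  show "sc (V[p:=v']) (plurality tb V) = sc V (plurality tb V)"
    using f1 aw W1w W1b unfolding f1_def w_def by auto
  show "hd v' \<in> C" using v' by auto
  show "hd (V!p) \<in> C" using Vp by auto
  show "plurality tb V \<in> C" using wp vf w_def by auto
qed


lemma upd_same2: "p1 \<noteq> p2 \<Longrightarrow> V[p1:=x, p2:=V!p2] = V[p1:=x]"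
  by (metis list_update_id nth_list_update_neq)

lemma no_bad_type:
  assumes val: "valid_election C tb V" and g: "two_by_two_GS_game C tb V p1 p2 i1 i2"
  shows "GS_game_type tb V p1 p2 i1 i2 \<notin> {Type_i, Type_vi}"
proof -
  note vf = valid_facts[OF val]
  have ne: "p1 \<noteq> p2" and g1: "GS_manipulation C tb V p1 i1" and g2: "GS_manipulation C tb V p2 i2"
    using g unfolding two_by_two_GS_game_def by auto
  have p1: "p1 < length V" and p2: "p2 < length V"
    using g1 g2 unfolding GS_manipulation_def by auto
  note M1 = manip_facts[OF val g1] and M2 = manip_facts[OF val g2]
  have V1: "distinct (V!p1)" using vf(4)[of "V!p1"] p1 by auto
  have V2: "distinct (V!p2)" using vf(4)[of "V!p2"] p2 by auto
  define a1 where "a1 = hd (V!p1)"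
  define a2 where "a2 = hd (V!p2)"
  define b1 where "b1 = hd i1"
  define b2 where "b2 = hd i2"
  define w where "w = plurality tb V"
  define f12 where "f12 = sc (V[p1:=i1, p2:=i2])"
  define W12 where "W12 = plurality tb (V[p1:=i1, p2:=i2])"
  have f12: "\<And>c. f12 c = sc V c - (if a1 = c then 1 else 0) + (if b1 = c then 1 else 0)
       - (if a2 = c then 1 else 0) + (if b2 = c then 1 else 0)"
  proof -
    fix c
    have "p2 < length (V[p1:=i1])" using p2 by simp
    from sc_upd[OF this, of i2 c] sc_upd[OF p1, of i1 c] ne
    show "f12 c = sc V c - (if a1 = c then 1 else 0) + (if b1 = c then 1 else 0)
       - (if a2 = c then 1 else 0) + (if b2 = c then 1 else 0)"
      unfolding f12_def a1_def a2_def b1_def b2_def by simp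
  qed
  have wp: "w \<in> set tb" "\<forall>d\<in>set tb. beats tb (sc V) w d"
    using win_props[OF vf(2)] unfolding w_def plurality_win by auto
  have Wp: "W12 \<in> set tb" "\<forall>d\<in>set tb. beats tb f12 W12 d"
    using win_props[OF vf(2)] unfolding W12_def f12_def plurality_win by auto
  have ws: "a1 \<noteq> w" "a2 \<noteq> w" "b1 \<noteq> w" "b2 \<noteq> w" "b1 \<noteq> a1" "b2 \<noteq> a2"
    using M1(1-3) M2(1-3) unfolding a1_def a2_def b1_def b2_def w_def by auto
  have inC: "b1 \<in> set tb" "b2 \<in> set tb" using M1(8) M2(8) vf(3) b1_def b2_def by auto
  have key: "W12 = b1 \<or> W12 = b2 \<or> (W12 = w \<and> b1 = a2 \<and> b2 = a1)"
  proof (cases "W12 = b1 \<or> W12 = b2")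
    case True then show ?thesis by blast
  next
    case False
    have Ww: "W12 = w"
    proof (rule ccontr)
      assume nw: "W12 \<noteq> w"
      have "beats tb f12 w W12"
        using beats_mono[of tb "sc V" w W12 f12] wp Wp ws False f12 by auto
      moreover have "beats tb f12 W12 w" using Wp wp by auto
      ultimately show False using beats_antisym[OF vf(1)] nw by blast
    qed
    have "b1 = a2"
    proof (rule ccontr)
      assume n: "b1 \<noteq> a2"
      have "beats tb f12 b1 w"
        using beats_mono[OF M1(5)] M1(6,7) f12 ws n unfolding b1_def[symmetric] w_def[symmetric]
        by auto
      moreover have "beats tb f12 w b1" using Wp Ww inC by auto
      ultimately show False using beats_antisym[OF vf(1)] ws by blast
    qed
    moreover have "b2 = a1"
    proof (rule ccontr)
      assume n: "b2 \<noteq> a1"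
      have "beats tb f12 b2 w"
        using beats_mono[OF M2(5)] M2(6,7) f12 ws n unfolding b2_def[symmetric] w_def[symmetric]
        by auto
      moreover have "beats tb f12 w b2" using Wp Ww inC by auto
      ultimately show False using beats_antisym[OF vf(1)] ws by blast
    qed
    ultimately show ?thesis using Ww by blast
  qed
  have gw1: "game_winner tb V p1 p2 (V!p1) i2 = b2"
    using M2(4) unfolding game_winner_def b2_def by simp
  have gw2: "game_winner tb V p1 p2 i1 (V!p2) = b1"
    unfolding game_winner_def upd_same2[OF ne] using M1(4) b1_def by simp
  have gw: "game_winner tb V p1 p2 i1 i2 = W12" unfolding game_winner_def W12_def by simp
  have r1: "rho1 tb V p1 p2 i1 i2 = rho_of (V!p1) W12 b2" unfolding rho1_def gw gw1 ..
  have r2: "rho2 tb V p1 p2 i1 i2 = rho_of (V!p2) W12 b1" unfolding rho2_def gw gw2 ..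
  have tz1: "\<And>x. type_of_pair RZero x \<notin> {Type_i, Type_vi}" by (case_tac x) auto
  have tz2: "\<And>x. type_of_pair x RZero \<notin> {Type_i, Type_vi}" by (case_tac x) auto
  from key show ?thesis
  proof (elim disjE conjE)
    assume "W12 = b1"
    then have "rho2 tb V p1 p2 i1 i2 = RZero" using r2 by (simp add: rho_of_def)
    then show ?thesis using tz2 unfolding GS_game_type_def by simp
  next
    assume "W12 = b2"
    then have "rho1 tb V p1 p2 i1 i2 = RZero" using r1 by (simp add: rho_of_def)
    then show ?thesis using tz1 unfolding GS_game_type_def by simp
  next
    assume h: "W12 = w" "b1 = a2" "b2 = a1"
    have "rho1 tb V p1 p2 i1 i2 = RNeg" using r1 h ws prefers_hd[OF V1, of w]
      unfolding rho_of_def a1_def by auto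
    moreover have "rho2 tb V p1 p2 i1 i2 = RNeg" using r2 h ws prefers_hd[OF V2, of w]
      unfolding rho_of_def a2_def by auto
    ultimately show ?thesis unfolding GS_game_type_def by simp
  qed
qed


lemma plur_upd_hd: "plur_score (V[i:=v]) c = plur_score (V[i:=[hd v]]) c"
proof (induction V arbitrary: i)
  case Nil then show ?case by simp
next
  case (Cons u V)
  then show ?case by (cases i) (auto simp: plur_score_def)
qed

lemma plurality_upd_hd: "plurality tb (V[i:=v]) = plurality tb (V[i:=[hd v]])"
  unfolding plurality_def using plur_upd_hd by metis

definition PP :: "'c list \<Rightarrow> 'c list list \<Rightarrow> nat \<Rightarrow> 'c \<Rightarrow> 'c" where
  "PP tb V i c = plurality tb (V[i:=[c]])"

definition QQ :: "'c set \<Rightarrow> 'c list \<Rightarrow> 'c list list \<Rightarrow> nat \<Rightarrow> 'c \<Rightarrow> bool" where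
  "QQ C tb V i c \<longleftrightarrow> prefers (V!i) (PP tb V i c) (plurality tb V) \<and>
     (\<forall>c'\<in>C. PP tb V i c' = PP tb V i c \<or> prefers (V!i) (PP tb V i c) (PP tb V i c'))"

lemma vote_with: "is_vote C tb \<Longrightarrow> c \<in> C \<Longrightarrow> is_vote C (c # filter (\<lambda>x. x \<noteq> c) tb)"
  unfolding is_vote_def by auto

lemma GS_manipulation_iff:
  assumes val: "valid_election C tb V"
  shows "GS_manipulation C tb V i v' \<longleftrightarrow> i < length V \<and> is_vote C v' \<and> QQ C tb V i (hd v')"
proof -
  have tb: "is_vote C tb" and C: "C \<noteq> {}" using val unfolding valid_election_def by auto
  have hdC: "\<And>v. is_vote C v \<Longrightarrow> hd v \<in> C" using C unfolding is_vote_def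
    by (metis hd_in_set set_empty)
  have "(\<forall>v''. is_vote C v'' \<longrightarrow>
        plurality tb (V[i := v'']) = plurality tb (V[i := v']) \<or>
        prefers (V ! i) (plurality tb (V[i := v'])) (plurality tb (V[i := v''])))
     \<longleftrightarrow> (\<forall>c'\<in>C. PP tb V i c' = PP tb V i (hd v') \<or> prefers (V!i) (PP tb V i (hd v')) (PP tb V i c'))"
  proof
    assume h: "\<forall>v''. is_vote C v'' \<longrightarrow>
        plurality tb (V[i := v'']) = plurality tb (V[i := v']) \<or>
        prefers (V ! i) (plurality tb (V[i := v'])) (plurality tb (V[i := v'']))"
    show "\<forall>c'\<in>C. PP tb V i c' = PP tb V i (hd v') \<or> prefers (V!i) (PP tb V i (hd v')) (PP tb V i c')"
    proof
      fix c' assume "c' \<in> C"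
      from h[rule_format, OF vote_with[OF tb this]]
      show "PP tb V i c' = PP tb V i (hd v') \<or> prefers (V!i) (PP tb V i (hd v')) (PP tb V i c')"
        unfolding PP_def using plurality_upd_hd by (metis list.sel(1))
    qed
  next
    assume h: "\<forall>c'\<in>C. PP tb V i c' = PP tb V i (hd v') \<or> prefers (V!i) (PP tb V i (hd v')) (PP tb V i c')"
    show "\<forall>v''. is_vote C v'' \<longrightarrow>
        plurality tb (V[i := v'']) = plurality tb (V[i := v']) \<or>
        prefers (V ! i) (plurality tb (V[i := v'])) (plurality tb (V[i := v'']))"
    proof (intro allI impI)
      fix v'' assume "is_vote C v''"
      from h[rule_format, OF hdC[OF this]]
      show "plurality tb (V[i := v'']) = plurality tb (V[i := v']) \<or>
        prefers (V ! i) (plurality tb (V[i := v'])) (plurality tb (V[i := v'']))"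
        unfolding PP_def using plurality_upd_hd by metis
    qed
  qed
  moreover have "plurality tb (V[i := v']) = PP tb V i (hd v')"
    unfolding PP_def using plurality_upd_hd by metis
  ultimately show ?thesis unfolding GS_manipulation_def QQ_def by auto
qed

lemma GS_manipulator_iff:
  assumes val: "valid_election C tb V"
  shows "GS_manipulator C tb V i \<longleftrightarrow> i < length V \<and> (\<exists>c\<in>C. QQ C tb V i c)"
proof -
  have tb: "is_vote C tb" and C: "C \<noteq> {}" using val unfolding valid_election_def by auto
  have hdC: "\<And>v. is_vote C v \<Longrightarrow> hd v \<in> C" using C unfolding is_vote_def
    by (metis hd_in_set set_empty)
  show ?thesis unfolding GS_manipulator_def GS_manipulation_iff[OF val]
    using hdC vote_with[OF tb] by (metis list.sel(1))
qed

lemma ex_ii: "valid_election {0,1,2::nat} [0,1,2] [[2,1,0],[0,1,2],[1,2,0]] \<and>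
  two_by_two_GS_game {0,1,2::nat} [0,1,2] [[2,1,0],[0,1,2],[1,2,0]] 0 2 [1,0,2] [2,0,1] \<and>
  GS_game_type [0::nat,1,2] [[2,1,0],[0,1,2],[1,2,0]] 0 2 [1,0,2] [2,0,1] = Type_ii"
proof -
  have val: "valid_election {0,1,2::nat} [0,1,2] [[2,1,0],[0,1,2],[1,2,0]]"
    by (simp add: valid_election_def is_vote_def insert_commute)
  have q0: "(\<exists>c\<in>{0,1,2}. QQ {0,1,2::nat} [0,1,2] [[2,1,0],[0,1,2],[1,2,0]] 0 c)"
    by (simp add: QQ_def PP_def plurality_def plur_score_def)
  have q1: "\<not> (\<exists>c\<in>{0,1,2}. QQ {0,1,2::nat} [0,1,2] [[2,1,0],[0,1,2],[1,2,0]] 1 c)"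
    by (simp add: QQ_def PP_def plurality_def plur_score_def)
  have q2: "(\<exists>c\<in>{0,1,2}. QQ {0,1,2::nat} [0,1,2] [[2,1,0],[0,1,2],[1,2,0]] 2 c)"
    by (simp add: QQ_def PP_def plurality_def plur_score_def)
  have cs: "\<And>i::nat. i < 3 \<Longrightarrow> i = 0 \<or> i = 1 \<or> i = 2" by arith
  have man: "\<And>i. GS_manipulator {0,1,2::nat} [0,1,2] [[2,1,0],[0,1,2],[1,2,0]] i \<longleftrightarrow> (i = 0 \<or> i = 2)"
  proof -
    fix i
    show "GS_manipulator {0,1,2::nat} [0,1,2] [[2,1,0],[0,1,2],[1,2,0]] i \<longleftrightarrow> (i = 0 \<or> i = 2)"
    proof (cases "i < 3")
      case True
      from cs[OF True] show ?thesis unfolding GS_manipulator_iff[OF val] by (elim disjE) (simp_all only: q0 q1 q2, simp_all)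
    next
      case False with GS_manipulator_iff[OF val, of i] show ?thesis by simp
    qed
  qed
  have "{i. GS_manipulator {0,1,2::nat} [0,1,2] [[2,1,0],[0,1,2],[1,2,0]] i} = {0,2}" using man by auto
  moreover have "GS_manipulation {0,1,2::nat} [0,1,2] [[2,1,0],[0,1,2],[1,2,0]] 0 [1,0,2]"
    unfolding GS_manipulation_iff[OF val]
    by (simp add: is_vote_def QQ_def PP_def plurality_def plur_score_def insert_commute)
  moreover have "GS_manipulation {0,1,2::nat} [0,1,2] [[2,1,0],[0,1,2],[1,2,0]] 2 [2,0,1]"
    unfolding GS_manipulation_iff[OF val]
    by (simp add: is_vote_def QQ_def PP_def plurality_def plur_score_def insert_commute)
  moreover have "GS_game_type [0::nat,1,2] [[2,1,0],[0,1,2],[1,2,0]] 0 2 [1,0,2] [2,0,1] = Type_ii"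
    by (simp add: GS_game_type_def rho1_def rho2_def rho_of_def game_winner_def plurality_def plur_score_def)
  ultimately show ?thesis using val unfolding two_by_two_GS_game_def by simp
qed

lemma ex_iii: "valid_election {0,1,2::nat} [0,1,2] [[1,2,0],[2,0,1],[2,0,1],[1,0,2],[0,1,2]] \<and>
  two_by_two_GS_game {0,1,2::nat} [0,1,2] [[1,2,0],[2,0,1],[2,0,1],[1,0,2],[0,1,2]] 1 2 [0,1,2] [0,1,2] \<and>
  GS_game_type [0::nat,1,2] [[1,2,0],[2,0,1],[2,0,1],[1,0,2],[0,1,2]] 1 2 [0,1,2] [0,1,2] = Type_iii"
proof -
  have val: "valid_election {0,1,2::nat} [0,1,2] [[1,2,0],[2,0,1],[2,0,1],[1,0,2],[0,1,2]]"
    by (simp add: valid_election_def is_vote_def insert_commute)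
  have q0: "\<not> (\<exists>c\<in>{0,1,2}. QQ {0,1,2::nat} [0,1,2] [[1,2,0],[2,0,1],[2,0,1],[1,0,2],[0,1,2]] 0 c)"
    by (simp add: QQ_def PP_def plurality_def plur_score_def)
  have q1: "(\<exists>c\<in>{0,1,2}. QQ {0,1,2::nat} [0,1,2] [[1,2,0],[2,0,1],[2,0,1],[1,0,2],[0,1,2]] 1 c)"
    by (simp add: QQ_def PP_def plurality_def plur_score_def)
  have q2: "(\<exists>c\<in>{0,1,2}. QQ {0,1,2::nat} [0,1,2] [[1,2,0],[2,0,1],[2,0,1],[1,0,2],[0,1,2]] 2 c)"
    by (simp add: QQ_def PP_def plurality_def plur_score_def)
  have q3: "\<not> (\<exists>c\<in>{0,1,2}. QQ {0,1,2::nat} [0,1,2] [[1,2,0],[2,0,1],[2,0,1],[1,0,2],[0,1,2]] 3 c)"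
    by (simp add: QQ_def PP_def plurality_def plur_score_def)
  have q4: "\<not> (\<exists>c\<in>{0,1,2}. QQ {0,1,2::nat} [0,1,2] [[1,2,0],[2,0,1],[2,0,1],[1,0,2],[0,1,2]] 4 c)"
    by (simp add: QQ_def PP_def plurality_def plur_score_def)
  have cs: "\<And>i::nat. i < 5 \<Longrightarrow> i = 0 \<or> i = 1 \<or> i = 2 \<or> i = 3 \<or> i = 4" by arith
  have man: "\<And>i. GS_manipulator {0,1,2::nat} [0,1,2] [[1,2,0],[2,0,1],[2,0,1],[1,0,2],[0,1,2]] i \<longleftrightarrow> (i = 1 \<or> i = 2)"
  proof -
    fix i
    show "GS_manipulator {0,1,2::nat} [0,1,2] [[1,2,0],[2,0,1],[2,0,1],[1,0,2],[0,1,2]] i \<longleftrightarrow> (i = 1 \<or> i = 2)"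
    proof (cases "i < 5")
      case True
      from cs[OF True] show ?thesis unfolding GS_manipulator_iff[OF val] by (elim disjE) (simp_all only: q0 q1 q2 q3 q4, simp_all)
    next
      case False with GS_manipulator_iff[OF val, of i] show ?thesis by simp
    qed
  qed
  have "{i. GS_manipulator {0,1,2::nat} [0,1,2] [[1,2,0],[2,0,1],[2,0,1],[1,0,2],[0,1,2]] i} = {1,2}" using man by auto
  moreover have "GS_manipulation {0,1,2::nat} [0,1,2] [[1,2,0],[2,0,1],[2,0,1],[1,0,2],[0,1,2]] 1 [0,1,2]"
    unfolding GS_manipulation_iff[OF val]
    by (simp add: is_vote_def QQ_def PP_def plurality_def plur_score_def insert_commute)
  moreover have "GS_manipulation {0,1,2::nat} [0,1,2] [[1,2,0],[2,0,1],[2,0,1],[1,0,2],[0,1,2]] 2 [0,1,2]"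
    unfolding GS_manipulation_iff[OF val]
    by (simp add: is_vote_def QQ_def PP_def plurality_def plur_score_def insert_commute)
  moreover have "GS_game_type [0::nat,1,2] [[1,2,0],[2,0,1],[2,0,1],[1,0,2],[0,1,2]] 1 2 [0,1,2] [0,1,2] = Type_iii"
    by (simp add: GS_game_type_def rho1_def rho2_def rho_of_def game_winner_def plurality_def plur_score_def)
  ultimately show ?thesis using val unfolding two_by_two_GS_game_def by simp
qed

lemma ex_iv: "valid_election {0,1,2,3::nat} [0,1,2,3] [[2,0,3,1],[0,2,1,3],[1,2,0,3],[3,0,2,1],[3,1,2,0],[2,0,1,3]] \<and>
  two_by_two_GS_game {0,1,2,3::nat} [0,1,2,3] [[2,0,3,1],[0,2,1,3],[1,2,0,3],[3,0,2,1],[3,1,2,0],[2,0,1,3]] 3 4 [0,1,2,3] [1,0,2,3] \<and>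
  GS_game_type [0::nat,1,2,3] [[2,0,3,1],[0,2,1,3],[1,2,0,3],[3,0,2,1],[3,1,2,0],[2,0,1,3]] 3 4 [0,1,2,3] [1,0,2,3] = Type_iv"
proof -
  have val: "valid_election {0,1,2,3::nat} [0,1,2,3] [[2,0,3,1],[0,2,1,3],[1,2,0,3],[3,0,2,1],[3,1,2,0],[2,0,1,3]]"
    by (simp add: valid_election_def is_vote_def insert_commute)
  have q0: "\<not> (\<exists>c\<in>{0,1,2,3}. QQ {0,1,2,3::nat} [0,1,2,3] [[2,0,3,1],[0,2,1,3],[1,2,0,3],[3,0,2,1],[3,1,2,0],[2,0,1,3]] 0 c)"
    by (simp add: QQ_def PP_def plurality_def plur_score_def)
  have q1: "\<not> (\<exists>c\<in>{0,1,2,3}. QQ {0,1,2,3::nat} [0,1,2,3] [[2,0,3,1],[0,2,1,3],[1,2,0,3],[3,0,2,1],[3,1,2,0],[2,0,1,3]] 1 c)"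
    by (simp add: QQ_def PP_def plurality_def plur_score_def)
  have q2: "\<not> (\<exists>c\<in>{0,1,2,3}. QQ {0,1,2,3::nat} [0,1,2,3] [[2,0,3,1],[0,2,1,3],[1,2,0,3],[3,0,2,1],[3,1,2,0],[2,0,1,3]] 2 c)"
    by (simp add: QQ_def PP_def plurality_def plur_score_def)
  have q3: "(\<exists>c\<in>{0,1,2,3}. QQ {0,1,2,3::nat} [0,1,2,3] [[2,0,3,1],[0,2,1,3],[1,2,0,3],[3,0,2,1],[3,1,2,0],[2,0,1,3]] 3 c)"
    by (simp add: QQ_def PP_def plurality_def plur_score_def)
  have q4: "(\<exists>c\<in>{0,1,2,3}. QQ {0,1,2,3::nat} [0,1,2,3] [[2,0,3,1],[0,2,1,3],[1,2,0,3],[3,0,2,1],[3,1,2,0],[2,0,1,3]] 4 c)"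
    by (simp add: QQ_def PP_def plurality_def plur_score_def)
  have q5: "\<not> (\<exists>c\<in>{0,1,2,3}. QQ {0,1,2,3::nat} [0,1,2,3] [[2,0,3,1],[0,2,1,3],[1,2,0,3],[3,0,2,1],[3,1,2,0],[2,0,1,3]] 5 c)"
    by (simp add: QQ_def PP_def plurality_def plur_score_def)
  have cs: "\<And>i::nat. i < 6 \<Longrightarrow> i = 0 \<or> i = 1 \<or> i = 2 \<or> i = 3 \<or> i = 4 \<or> i = 5" by arith
  have man: "\<And>i. GS_manipulator {0,1,2,3::nat} [0,1,2,3] [[2,0,3,1],[0,2,1,3],[1,2,0,3],[3,0,2,1],[3,1,2,0],[2,0,1,3]] i \<longleftrightarrow> (i = 3 \<or> i = 4)"
  proof -
    fix i
    show "GS_manipulator {0,1,2,3::nat} [0,1,2,3] [[2,0,3,1],[0,2,1,3],[1,2,0,3],[3,0,2,1],[3,1,2,0],[2,0,1,3]] i \<longleftrightarrow> (i = 3 \<or> i = 4)"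
    proof (cases "i < 6")
      case True
      from cs[OF True] show ?thesis unfolding GS_manipulator_iff[OF val] by (elim disjE) (simp_all only: q0 q1 q2 q3 q4 q5, simp_all)
    next
      case False with GS_manipulator_iff[OF val, of i] show ?thesis by simp
    qed
  qed
  have "{i. GS_manipulator {0,1,2,3::nat} [0,1,2,3] [[2,0,3,1],[0,2,1,3],[1,2,0,3],[3,0,2,1],[3,1,2,0],[2,0,1,3]] i} = {3,4}" using man by auto
  moreover have "GS_manipulation {0,1,2,3::nat} [0,1,2,3] [[2,0,3,1],[0,2,1,3],[1,2,0,3],[3,0,2,1],[3,1,2,0],[2,0,1,3]] 3 [0,1,2,3]"
    unfolding GS_manipulation_iff[OF val]
    by (simp add: is_vote_def QQ_def PP_def plurality_def plur_score_def insert_commute)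
  moreover have "GS_manipulation {0,1,2,3::nat} [0,1,2,3] [[2,0,3,1],[0,2,1,3],[1,2,0,3],[3,0,2,1],[3,1,2,0],[2,0,1,3]] 4 [1,0,2,3]"
    unfolding GS_manipulation_iff[OF val]
    by (simp add: is_vote_def QQ_def PP_def plurality_def plur_score_def insert_commute)
  moreover have "GS_game_type [0::nat,1,2,3] [[2,0,3,1],[0,2,1,3],[1,2,0,3],[3,0,2,1],[3,1,2,0],[2,0,1,3]] 3 4 [0,1,2,3] [1,0,2,3] = Type_iv"
    by (simp add: GS_game_type_def rho1_def rho2_def rho_of_def game_winner_def plurality_def plur_score_def)
  ultimately show ?thesis using val unfolding two_by_two_GS_game_def by simp
qed

lemma ex_v: "valid_election {0,1,2,3::nat} [0,1,2,3] [[3,2,1,0],[2,0,3,1],[1,2,0,3]] \<and>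
  two_by_two_GS_game {0,1,2,3::nat} [0,1,2,3] [[3,2,1,0],[2,0,3,1],[1,2,0,3]] 0 1 [2,0,1,3] [0,1,2,3] \<and>
  GS_game_type [0::nat,1,2,3] [[3,2,1,0],[2,0,3,1],[1,2,0,3]] 0 1 [2,0,1,3] [0,1,2,3] = Type_v"
proof -
  have val: "valid_election {0,1,2,3::nat} [0,1,2,3] [[3,2,1,0],[2,0,3,1],[1,2,0,3]]"
    by (simp add: valid_election_def is_vote_def insert_commute)
  have q0: "(\<exists>c\<in>{0,1,2,3}. QQ {0,1,2,3::nat} [0,1,2,3] [[3,2,1,0],[2,0,3,1],[1,2,0,3]] 0 c)"
    by (simp add: QQ_def PP_def plurality_def plur_score_def)
  have q1: "(\<exists>c\<in>{0,1,2,3}. QQ {0,1,2,3::nat} [0,1,2,3] [[3,2,1,0],[2,0,3,1],[1,2,0,3]] 1 c)"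
    by (simp add: QQ_def PP_def plurality_def plur_score_def)
  have q2: "\<not> (\<exists>c\<in>{0,1,2,3}. QQ {0,1,2,3::nat} [0,1,2,3] [[3,2,1,0],[2,0,3,1],[1,2,0,3]] 2 c)"
    by (simp add: QQ_def PP_def plurality_def plur_score_def)
  have cs: "\<And>i::nat. i < 3 \<Longrightarrow> i = 0 \<or> i = 1 \<or> i = 2" by arith
  have man: "\<And>i. GS_manipulator {0,1,2,3::nat} [0,1,2,3] [[3,2,1,0],[2,0,3,1],[1,2,0,3]] i \<longleftrightarrow> (i = 0 \<or> i = 1)"
  proof -
    fix i
    show "GS_manipulator {0,1,2,3::nat} [0,1,2,3] [[3,2,1,0],[2,0,3,1],[1,2,0,3]] i \<longleftrightarrow> (i = 0 \<or> i = 1)"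
    proof (cases "i < 3")
      case True
      from cs[OF True] show ?thesis unfolding GS_manipulator_iff[OF val] by (elim disjE) (simp_all only: q0 q1 q2, simp_all)
    next
      case False with GS_manipulator_iff[OF val, of i] show ?thesis by simp
    qed
  qed
  have "{i. GS_manipulator {0,1,2,3::nat} [0,1,2,3] [[3,2,1,0],[2,0,3,1],[1,2,0,3]] i} = {0,1}" using man by auto
  moreover have "GS_manipulation {0,1,2,3::nat} [0,1,2,3] [[3,2,1,0],[2,0,3,1],[1,2,0,3]] 0 [2,0,1,3]"
    unfolding GS_manipulation_iff[OF val]
    by (simp add: is_vote_def QQ_def PP_def plurality_def plur_score_def insert_commute)
  moreover have "GS_manipulation {0,1,2,3::nat} [0,1,2,3] [[3,2,1,0],[2,0,3,1],[1,2,0,3]] 1 [0,1,2,3]"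
    unfolding GS_manipulation_iff[OF val]
    by (simp add: is_vote_def QQ_def PP_def plurality_def plur_score_def insert_commute)
  moreover have "GS_game_type [0::nat,1,2,3] [[3,2,1,0],[2,0,3,1],[1,2,0,3]] 0 1 [2,0,1,3] [0,1,2,3] = Type_v"
    by (simp add: GS_game_type_def rho1_def rho2_def rho_of_def game_winner_def plurality_def plur_score_def)
  ultimately show ?thesis using val unfolding two_by_two_GS_game_def by simp
qed

theorem mainTheorem5:
  shows "(\<forall>T\<in>{Type_ii, Type_iii, Type_iv, Type_v}.
            \<exists>(C::nat set) tb V p1 p2 i1 i2.
              valid_election C tb V \<and> two_by_two_GS_game C tb V p1 p2 i1 i2 \<and>
              GS_game_type tb V p1 p2 i1 i2 = T)
       \<and> (\<forall>(C::'c set) tb V p1 p2 i1 i2.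
              valid_election C tb V \<and> two_by_two_GS_game C tb V p1 p2 i1 i2 \<longrightarrow>
              GS_game_type tb V p1 p2 i1 i2 \<notin> {Type_i, Type_vi})"
proof (intro conjI ballI allI impI)
  fix T assume "T \<in> {Type_ii, Type_iii, Type_iv, Type_v}"
  then show "\<exists>(C::nat set) tb V p1 p2 i1 i2.
              valid_election C tb V \<and> two_by_two_GS_game C tb V p1 p2 i1 i2 \<and>
              GS_game_type tb V p1 p2 i1 i2 = T"
  proof (elim insertE emptyE)
    assume "T = Type_ii" then show ?thesis using ex_ii by blast
  next
    assume "T = Type_iii" then show ?thesis using ex_iii by blast
  next
    assume "T = Type_iv" then show ?thesis using ex_iv by blast
  next
    assume "T = Type_v" then show ?thesis using ex_v by blast
  qed
next
  fix C :: "'c set" and tb V p1 p2 i1 i2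
  assume "valid_election C tb V \<and> two_by_two_GS_game C tb V p1 p2 i1 i2"
  then show "GS_game_type tb V p1 p2 i1 i2 \<notin> {Type_i, Type_vi}"
    using no_bad_type by blast
qed

end
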